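(* Let $(G,H,\mathcal{L})$ be a cut-and-project scheme with injective $\star$-map. Let $W\subseteq H$ and let $\Gamma\subseteq G$ satisfy $\Lambda_{W^\circ}\subseteq\Gamma\subseteq\Lambda_{\overline{W}}$. Then there exists $W'\subseteq H$ with $\Gamma=\Lambda_{W'}$ such that $W'$ has each of the properties precompactness, non-empty interior, topological regularity and measure-theoretic regularity which $W$ has. If additionally $G$ is $\sigma$-compact and $W$ is precompact and (Borel) measurable, then $W'$ is precompact and measurable.
   Context: A cut-and-project scheme $(G,H,\mathcal{L})$ consists of locally compact abelian groups $G,H$ and a discrete cocompact subgroup $\mathcal{L}\subseteq G\times H$ such that $\pi^G|_{\mathcal{L}}$ is injective and $\pi^H(\mathcal{L})$ is dense in $H$. Let $L=\pi^G(\mathcal{L})$; the $\star$-map $L\to H$ is $x^\star=\pi^H((\pi^G|_{\mathcal{L}})^{-1}(x))$. For $W\subseteq H$, $\Lambda_W=\{x\in L: x^\star\in W\}$. Precompact: $\overline W$ compact; topologically regular: $\overline W=\overline{W^\circ}$; measure-theoretically regular: $\partial W=\overline W\setminus W^\circ$ has Haar measure zero. *)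

theory Defs
  imports "HOL-Analysis.Analysis"
begin

definition LCA_group :: "'a::{topological_ab_group_add, t2_space} itself \<Rightarrow> bool" where
  "LCA_group _ \<longleftrightarrow> locally_compact_space (euclidean :: 'a topology)"

text \<open>Cocompactness: (G \<times> H)/L is compact, expressed by the existence of a compact K with K + L = G \<times> H.\<close>
definition cut_and_project ::
  "('g::{topological_ab_group_add, t2_space} \<times> 'h::{topological_ab_group_add, t2_space}) set \<Rightarrow> bool" where
  "cut_and_project \<L> \<longleftrightarrow>
     LCA_group TYPE('g) \<and> LCA_group TYPE('h) \<and>
     (0, 0) \<in> \<L> \<and>
     (\<forall>a\<in>\<L>. \<forall>b\<in>\<L>. (fst a + fst b, snd a + snd b) \<in> \<L>) \<and>
     (\<forall>a\<in>\<L>. (- fst a, - snd a) \<in> \<L>) \<and>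
     (\<forall>z\<in>\<L>. \<exists>U. open U \<and> U \<inter> \<L> = {z}) \<and>
     (\<exists>K. compact K \<and> (\<forall>z. \<exists>k\<in>K. \<exists>l\<in>\<L>. z = (fst k + fst l, snd k + snd l))) \<and>
     inj_on fst \<L> \<and>
     closure (snd ` \<L>) = UNIV"

definition star_map :: "('g \<times> 'h) set \<Rightarrow> 'g \<Rightarrow> 'h" where
  "star_map \<L> x = snd (THE z. z \<in> \<L> \<and> fst z = x)"

definition model_set :: "('g \<times> 'h) set \<Rightarrow> 'h set \<Rightarrow> 'g set" where
  "model_set \<L> W = {x \<in> fst ` \<L>. star_map \<L> x \<in> W}"

definition precompact :: "'a::topological_space set \<Rightarrow> bool" where
  "precompact W \<longleftrightarrow> compact (closure W)"

definition top_regular :: "'a::topological_space set \<Rightarrow> bool" where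
  "top_regular W \<longleftrightarrow> closure W = closure (interior W)"

definition haar_measure :: "'a::{topological_ab_group_add, t2_space} measure \<Rightarrow> bool" where
  "haar_measure \<mu> \<longleftrightarrow>
     sets \<mu> = sets borel \<and> space \<mu> = UNIV \<and>
     (\<forall>A\<in>sets borel. \<forall>x. emeasure \<mu> ((\<lambda>y. x + y) ` A) = emeasure \<mu> A) \<and>
     (\<forall>K. compact K \<longrightarrow> emeasure \<mu> K < \<infinity>) \<and>
     (\<forall>U. open U \<and> U \<noteq> {} \<longrightarrow> emeasure \<mu> U > 0) \<and>
     (\<forall>A\<in>sets borel. emeasure \<mu> A = (INF U\<in>{U. open U \<and> A \<subseteq> U}. emeasure \<mu> U)) \<and>
     (\<forall>U. open U \<longrightarrow> emeasure \<mu> U = (SUP K\<in>{K. compact K \<and> K \<subseteq> U}. emeasure \<mu> K))"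

definition measure_regular :: "'a measure \<Rightarrow> 'a::topological_space set \<Rightarrow> bool" where
  "measure_regular \<mu> W \<longleftrightarrow> emeasure \<mu> (frontier W) = 0"

definition sigma_compact_space :: "'a::topological_space itself \<Rightarrow> bool" where
  "sigma_compact_space _ \<longleftrightarrow> (\<exists>K :: nat \<Rightarrow> 'a set. (\<forall>n. compact (K n)) \<and> (\<Union>n. K n) = UNIV)"

end

theory Submission
  imports Defs
begin

lemma diff_nbhd:
  fixes U :: "'a::topological_group_add set"
  assumes "open U" "0 \<in> U"
  obtains V where "open V" "0 \<in> V" "\<forall>x\<in>V. \<forall>y\<in>V. x - y \<in> U"
proof -
  have "((\<lambda>p. fst p - snd p) \<longlongrightarrow> (0::'a) - 0) (nhds ((0::'a), (0::'a)))"
    using tendsto_diff[OF tendsto_fst[OF filterlim_ident] tendsto_snd[OF filterlim_ident], of "(0::'a,0::'a)"]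
    by simp
  then have "eventually (\<lambda>p. fst p - snd p \<in> U) (nhds ((0::'a), (0::'a)))"
    using assms by (auto dest: topological_tendstoD)
  then obtain Q where Q: "eventually Q (nhds 0)" "\<forall>x y. Q x \<longrightarrow> Q y \<longrightarrow> x - y \<in> U"
    unfolding nhds_prod eventually_prod_same by auto
  then obtain V where V: "open V" "0 \<in> V" "\<forall>x\<in>V. Q x" unfolding eventually_nhds by auto
  have "\<forall>x\<in>V. \<forall>y\<in>V. x - y \<in> U"
  proof (intro ballI)
    fix x y assume "x \<in> V" "y \<in> V"
    then have "Q x" "Q y" using V(3) by auto
    then show "x - y \<in> U" using Q(2) by auto
  qed
  then show ?thesis by (rule that[OF V(1) V(2)])
qed

lemma lattice_compact_finite:
  fixes \<L> :: "('g::{topological_ab_group_add, t2_space} \<times> 'h::{topological_ab_group_add, t2_space}) set"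
  assumes cps: "cut_and_project \<L>" and K: "compact K"
  shows "finite (\<L> \<inter> K)"
proof -
  have z: "(0,0) \<in> \<L>" and add: "\<And>a b. a \<in> \<L> \<Longrightarrow> b \<in> \<L> \<Longrightarrow> (fst a + fst b, snd a + snd b) \<in> \<L>"
    and neg: "\<And>a. a \<in> \<L> \<Longrightarrow> (- fst a, - snd a) \<in> \<L>"
    and disc: "\<And>z. z \<in> \<L> \<Longrightarrow> \<exists>U. open U \<and> U \<inter> \<L> = {z}"
    using cps unfolding cut_and_project_def by auto
  have sub: "(fst a - fst b, snd a - snd b) \<in> \<L>" if "a \<in> \<L>" "b \<in> \<L>" for a b
    using add[OF that(1) neg[OF that(2)]] by simp
  obtain U where U: "open U" "U \<inter> \<L> = {(0,0)}" using disc[OF z] by blast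
  then have "(0,0) \<in> U" by auto
  then obtain U1 U2 where U12: "open U1" "open U2" "(0,0) \<in> U1 \<times> U2" "U1 \<times> U2 \<subseteq> U"
    using open_prod_elim[OF U(1)] by metis
  obtain V1 where V1: "open V1" "0 \<in> V1" "\<forall>x\<in>V1. \<forall>y\<in>V1. x - y \<in> U1"
    using diff_nbhd[of U1] U12 by auto
  obtain V2 where V2: "open V2" "0 \<in> V2" "\<forall>x\<in>V2. \<forall>y\<in>V2. x - y \<in> U2"
    using diff_nbhd[of U2] U12 by auto
  define B where "B c = {p. fst p - fst c \<in> V1 \<and> snd p - snd c \<in> V2}" for c :: "'g \<times> 'h"
  have openB: "open (B c)" for c
  proof -
    have "B c = (\<lambda>p. (fst p - fst c, snd p - snd c)) -` (V1 \<times> V2)" unfolding B_def by auto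
    moreover have "continuous_on UNIV (\<lambda>p::'g\<times>'h. (fst p - fst c, snd p - snd c))"
      by (intro continuous_intros)
    ultimately show ?thesis using V1 V2 by (simp add: open_vimage open_Times)
  qed
  have cov: "K \<subseteq> (\<Union>c\<in>K. B c)" using V1 V2 unfolding B_def by auto
  obtain F where F: "F \<subseteq> K" "finite F" "K \<subseteq> (\<Union>c\<in>F. B c)"
    using compactE_image[OF K, where f=B, OF openB cov] by blast
  have one: "a = b" if "a \<in> \<L> \<inter> B c" "b \<in> \<L> \<inter> B c" for a b c
  proof -
    have m: "fst a - fst c \<in> V1" "fst b - fst c \<in> V1" "snd a - snd c \<in> V2" "snd b - snd c \<in> V2"
      using that unfolding B_def by auto
    have "(fst a - fst c) - (fst b - fst c) \<in> U1" "(snd a - snd c) - (snd b - snd c) \<in> U2"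
      using m V1(3) V2(3) by blast+
    then have "fst a - fst b \<in> U1" "snd a - snd b \<in> U2" by simp_all
    then have "(fst a - fst b, snd a - snd b) \<in> U" using U12 by auto
    moreover have "(fst a - fst b, snd a - snd b) \<in> \<L>" using sub that by auto
    ultimately have "(fst a - fst b, snd a - snd b) = (0,0)" using U by blast
    then show ?thesis by (simp add: prod_eq_iff)
  qed
  have fin1: "finite (\<L> \<inter> B c)" for c
  proof (cases "\<L> \<inter> B c = {}")
    case False
    then obtain a where "a \<in> \<L> \<inter> B c" by auto
    then have "\<L> \<inter> B c = {a}" using one by blast
    then show ?thesis by simp
  qed simp
  have "\<L> \<inter> K \<subseteq> (\<Union>c\<in>F. \<L> \<inter> B c)" using F by auto
  then show ?thesis using F(2) fin1 by (meson finite_UN_I finite_subset)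
qed

lemma star_lattice:
  assumes "inj_on fst \<L>" "z \<in> \<L>"
  shows "star_map \<L> (fst z) = snd z"
proof -
  have "(THE z'. z' \<in> \<L> \<and> fst z' = fst z) = z"
    using assms by (intro the_equality) (auto dest: inj_onD)
  then show ?thesis unfolding star_map_def by simp
qed

theorem proposition2p4:
  fixes \<L> :: "('g::{topological_ab_group_add, t2_space} \<times> 'h::{topological_ab_group_add, t2_space}) set"
    and \<mu> :: "'h measure"
    and W :: "'h set" and \<Gamma> :: "'g set"
  assumes cps: "cut_and_project \<L>"
    and inj_star: "inj_on snd \<L>"
    and haar: "haar_measure \<mu>"
    and lower: "model_set \<L> (interior W) \<subseteq> \<Gamma>"
    and upper: "\<Gamma> \<subseteq> model_set \<L> (closure W)"
  shows "\<exists>W'. \<Gamma> = model_set \<L> W' \<and>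
           (precompact W \<longrightarrow> precompact W') \<and>
           (interior W \<noteq> {} \<longrightarrow> interior W' \<noteq> {}) \<and>
           (top_regular W \<longrightarrow> top_regular W') \<and>
           (measure_regular \<mu> W \<longrightarrow> measure_regular \<mu> W') \<and>
           (sigma_compact_space TYPE('g) \<and> precompact W \<and> W \<in> sets borel \<longrightarrow>
              precompact W' \<and> W' \<in> sets borel)"
proof -
  have injf: "inj_on fst \<L>" using cps unfolding cut_and_project_def by auto
  define S where "S = snd ` {z \<in> \<L>. fst z \<in> \<Gamma>}"
  define W' where "W' = interior W \<union> S"
  have S_cl: "S \<subseteq> closure W"
  proof
    fix y assume "y \<in> S"
    then obtain z where z: "z \<in> \<L>" "fst z \<in> \<Gamma>" "y = snd z" unfolding S_def by auto
    then have "star_map \<L> (fst z) \<in> closure W" using upper unfolding model_set_def by auto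
    then show "y \<in> closure W" using star_lattice[OF injf z(1)] z by simp
  qed
  have sub1: "interior W \<subseteq> W'" and sub2: "W' \<subseteq> closure W"
    unfolding W'_def using S_cl interior_subset[of W] closure_subset[of W] by auto
  have eq: "\<Gamma> = model_set \<L> W'"
  proof
    show "\<Gamma> \<subseteq> model_set \<L> W'"
    proof
      fix x assume x: "x \<in> \<Gamma>"
      then obtain z where z: "z \<in> \<L>" "x = fst z" using upper unfolding model_set_def by auto
      then have "star_map \<L> x \<in> S" using star_lattice[OF injf z(1)] x unfolding S_def by auto
      then show "x \<in> model_set \<L> W'" using z unfolding model_set_def W'_def by auto
    qed
  next
    show "model_set \<L> W' \<subseteq> \<Gamma>"
    proof
      fix x assume x: "x \<in> model_set \<L> W'"
      then obtain z where z: "z \<in> \<L>" "x = fst z" unfolding model_set_def by auto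
      have st: "star_map \<L> x = snd z" using star_lattice[OF injf z(1)] z by simp
      show "x \<in> \<Gamma>"
      proof (cases "star_map \<L> x \<in> interior W")
        case True
        then show ?thesis using lower z unfolding model_set_def by auto
      next
        case False
        then have "snd z \<in> S" using x st unfolding model_set_def W'_def by auto
        then obtain z' where z': "z' \<in> \<L>" "fst z' \<in> \<Gamma>" "snd z = snd z'" unfolding S_def by auto
        then have "z = z'" using inj_star z(1) by (auto dest: inj_onD)
        then show ?thesis using z z' by simp
      qed
    qed
  qed
  have clsub: "closure W' \<subseteq> closure W"
    using sub2 closure_mono closure_closure by metis
  have intsup: "interior W \<subseteq> interior W'"
    using sub1 interior_mono interior_interior by metis
  have P1: "precompact W \<longrightarrow> precompact W'"
  proof
    assume "precompact W"
    then have "compact (closure W \<inter> closure W')" unfolding precompact_def by auto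
    then show "precompact W'" unfolding precompact_def using clsub by (simp add: Int_absorb1)
  qed
  have P2: "interior W \<noteq> {} \<longrightarrow> interior W' \<noteq> {}" using intsup by auto
  have P3: "top_regular W \<longrightarrow> top_regular W'"
  proof
    assume "top_regular W"
    then have "closure W' \<subseteq> closure (interior W')"
      using clsub closure_mono[OF intsup] unfolding top_regular_def by auto
    moreover have "closure (interior W') \<subseteq> closure W'" by (simp add: closure_mono interior_subset)
    ultimately show "top_regular W'" unfolding top_regular_def by auto
  qed
  have fr: "frontier W' \<subseteq> frontier W" unfolding frontier_def using clsub intsup by auto
  have P4: "measure_regular \<mu> W \<longrightarrow> measure_regular \<mu> W'"
  proof
    assume "measure_regular \<mu> W"
    moreover have "frontier W \<in> sets \<mu>" using haar unfolding haar_measure_def by auto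
    then have "emeasure \<mu> (frontier W') \<le> emeasure \<mu> (frontier W)" by (rule emeasure_mono[OF fr])
    ultimately show "measure_regular \<mu> W'"
      unfolding measure_regular_def by simp
  qed
  have P5: "precompact W' \<and> W' \<in> sets borel"
    if sc: "sigma_compact_space TYPE('g)" and pc: "precompact W"
  proof -
    obtain K :: "nat \<Rightarrow> 'g set" where K: "\<And>n. compact (K n)" "(\<Union>n. K n) = UNIV"
      using sc unfolding sigma_compact_space_def by auto
    have cov: "{z \<in> \<L>. snd z \<in> closure W} \<subseteq> (\<Union>n. \<L> \<inter> (K n \<times> closure W))"
    proof
      fix z assume z: "z \<in> {z \<in> \<L>. snd z \<in> closure W}"
      have "fst z \<in> (\<Union>n. K n)" by (simp add: K(2))
      then obtain n where "fst z \<in> K n" by blast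
      then have "z \<in> \<L> \<inter> (K n \<times> closure W)" using z by (simp add: mem_Times_iff)
      then show "z \<in> (\<Union>n. \<L> \<inter> (K n \<times> closure W))" by blast
    qed
    have fin: "finite (\<L> \<inter> (K n \<times> closure W))" for n
      using lattice_compact_finite[OF cps compact_Times[OF K(1) pc[unfolded precompact_def]]] .
    have "countable (\<Union>n. \<L> \<inter> (K n \<times> closure W))"
      by (rule countable_UN) (simp_all add: countable_finite[OF fin])
    then have "countable {z \<in> \<L>. snd z \<in> closure W}" using cov by (rule countable_subset[rotated])
    moreover have "S \<subseteq> snd ` {z \<in> \<L>. snd z \<in> closure W}" using S_cl unfolding S_def by auto
    ultimately have "countable S" using countable_image countable_subset by blast
    then have "S \<in> sets borel" by (rule sets.countable[OF borel_closed[OF closed_singleton]])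
    moreover have "interior W \<in> sets borel" by (rule borel_open[OF open_interior])
    ultimately have "W' \<in> sets borel" unfolding W'_def by (rule sets.Un[rotated])
    then show ?thesis using P1 pc by auto
  qed
  show ?thesis using eq P1 P2 P3 P4 P5 by blast
qed

end
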